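(* Fix $\sigma>0$, let $\lambda=-\sigma$, and let $q_1,\ldots,q_n\in\Delta^d$ be $n$ i.i.d. samples from the Dirichlet perturbation model $Q=p\oplus D$ described in the context. Consider the fixed-point iteration: given $p(k)\in\Delta^d$, set $\theta(k)=\big(\tfrac{p^0(k)}{\lambda p^1(k)},\ldots,\tfrac{p^0(k)}{\lambda p^d(k)}\big)$, $y_i=F(q_i)=\big(\tfrac{q_i^1}{q_i^0},\ldots,\tfrac{q_i^d}{q_i^0}\big)$, $$\eta(k+1)=\sum_{i=1}^n w_i(\theta(k))\,y_i,\qquad w_i(\theta)=\frac{1/(1+\lambda\,\theta\cdot y_i)}{\sum_{j=1}^n 1/(1+\lambda\,\theta\cdot y_j)},$$ and let $p(k+1)=\Big(\frac{1}{1+\sum_{j=1}^d\eta^j(k+1)},\frac{\eta^1(k+1)}{1+\sum_{j=1}^d\eta^j(k+1)},\ldots,\frac{\eta^d(k+1)}{1+\sum_{j=1}^d\eta^j(k+1)}\Big)$. Then $$p(k+1)=p(k)\oplus\Big(\frac1n\sum_{i=1}^n (q_i\ominus p(k))\Big),$$ where $\frac1n\sum_{i=1}^n$ denotes the ordinary Euclidean average in $\mathbb{R}^{d+1}$. In particular, the update does not depend on $\lambda$ (equivalently on $\sigma$).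
   Context: $\Delta^d=\{p=(p^0,\ldots,p^d)\in(0,1)^{d+1}:p^0+\cdots+p^d=1\}$ is the open unit simplex (superscripts denote components). Perturbation: $p\oplus q:=\big(\frac{p^jq^j}{\sum_{l=0}^d p^lq^l}\big)_{j=0}^d$; difference: $p\ominus q:=\big(\frac{p^j/q^j}{\sum_{l=0}^d p^l/q^l}\big)_{j=0}^d$. Dirichlet perturbation model: for $p\in\Delta^d$ (the parameter) and $D=(D^0,\ldots,D^d)$ a Dirichlet random vector with all parameters equal to $\frac{1}{\sigma(1+d)}$, the observation is $Q=p\oplus D\in\Delta^d$. This model is a $\lambda$-exponential family $(1+\lambda\theta\cdot F(q))_+^{1/\lambda}e^{-\varphi(\theta)}$ with $\lambda=-\sigma$, natural parameter $\theta=\big(\frac{p^0}{\lambda p^1},\ldots,\frac{p^0}{\lambda p^d}\big)\in(-\infty,0)^d$, statistic $F(q)=\big(\frac{q^1}{q^0},\ldots,\frac{q^d}{q^0}\big)$, and dual parameter $\eta=\big(\frac{p^1}{p^0},\ldots,\frac{p^d}{p^0}\big)=\frac1\lambda\big(\frac1{\theta^1},\ldots,\frac1{\theta^d}\big)\in(0,\infty)^d$; the iteration in the claim is the general fixed-point iteration $\eta(k+1)=\sum_i w_i(\theta(k))y_i$, $\theta(k+1)=\frac1\lambda(1/\eta^1(k+1),\ldots,1/\eta^d(k+1))$ written in terms of the simplex parameter $p$. *)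

theory Defs
  imports Complex_Main
begin

text \<open>Points of R^(d+1) are functions nat => real; only components 0..d matter.\<close>

definition simplex :: "nat \<Rightarrow> (nat \<Rightarrow> real) \<Rightarrow> bool" where
  "simplex d p \<longleftrightarrow> (\<forall>j\<le>d. 0 < p j \<and> p j < 1) \<and> (\<Sum>j\<le>d. p j) = 1"

definition perturb :: "nat \<Rightarrow> (nat \<Rightarrow> real) \<Rightarrow> (nat \<Rightarrow> real) \<Rightarrow> (nat \<Rightarrow> real)" where
  "perturb d p q = (\<lambda>j. p j * q j / (\<Sum>l\<le>d. p l * q l))"

definition difference :: "nat \<Rightarrow> (nat \<Rightarrow> real) \<Rightarrow> (nat \<Rightarrow> real) \<Rightarrow> (nat \<Rightarrow> real)" where
  "difference d p q = (\<lambda>j. (p j / q j) / (\<Sum>l\<le>d. p l / q l))"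

definition nat_param :: "real \<Rightarrow> (nat \<Rightarrow> real) \<Rightarrow> (nat \<Rightarrow> real)" where
  "nat_param lam p = (\<lambda>j. p 0 / (lam * p j))"

definition stat_F :: "(nat \<Rightarrow> real) \<Rightarrow> (nat \<Rightarrow> real)" where
  "stat_F q = (\<lambda>j. q j / q 0)"

definition dotd :: "nat \<Rightarrow> (nat \<Rightarrow> real) \<Rightarrow> (nat \<Rightarrow> real) \<Rightarrow> real" where
  "dotd d x y = (\<Sum>j=1..d. x j * y j)"

definition weight :: "real \<Rightarrow> nat \<Rightarrow> nat \<Rightarrow> (nat \<Rightarrow> nat \<Rightarrow> real) \<Rightarrow> (nat \<Rightarrow> real) \<Rightarrow> nat \<Rightarrow> real" where
  "weight lam d n y \<theta> i =
     (1 / (1 + lam * dotd d \<theta> (y i))) / (\<Sum>j=1..n. 1 / (1 + lam * dotd d \<theta> (y j)))"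

definition eta_next :: "real \<Rightarrow> nat \<Rightarrow> nat \<Rightarrow> (nat \<Rightarrow> nat \<Rightarrow> real) \<Rightarrow> (nat \<Rightarrow> real) \<Rightarrow> (nat \<Rightarrow> real)" where
  "eta_next lam d n q p =
     (let y = (\<lambda>i. stat_F (q i)); \<theta> = nat_param lam p
      in (\<lambda>j. \<Sum>i=1..n. weight lam d n y \<theta> i * y i j))"

definition eta_to_p :: "nat \<Rightarrow> (nat \<Rightarrow> real) \<Rightarrow> (nat \<Rightarrow> real)" where
  "eta_to_p d \<eta> = (\<lambda>j. if j = 0 then 1 / (1 + (\<Sum>l=1..d. \<eta> l))
                        else \<eta> j / (1 + (\<Sum>l=1..d. \<eta> l)))"

definition fp_step :: "real \<Rightarrow> nat \<Rightarrow> nat \<Rightarrow> (nat \<Rightarrow> nat \<Rightarrow> real) \<Rightarrow> (nat \<Rightarrow> real) \<Rightarrow> (nat \<Rightarrow> real)" where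
  "fp_step lam d n q p = eta_to_p d (eta_next lam d n q p)"

end

theory Submission
  imports Defs
begin

lemma sum_split0: "(\<Sum>l\<le>d. f l) = f 0 + (\<Sum>l=1..d. f l)" for f :: "nat \<Rightarrow> real"
proof -
  have "{..d} = insert 0 {1..d}" by auto
  then show ?thesis by simp
qed

theorem proposition2:
  fixes \<sigma> :: real and d n :: nat
    and q :: "nat \<Rightarrow> nat \<Rightarrow> real" and p :: "nat \<Rightarrow> real"
  assumes "\<sigma> > 0" and "n \<ge> 1"
    and "\<forall>i\<in>{1..n}. simplex d (q i)"
    and "simplex d p"
  shows "\<forall>j\<le>d. fp_step (- \<sigma>) d n q p j
           = perturb d p (\<lambda>l. (1 / real n) * (\<Sum>i=1..n. difference d (q i) p l)) j"
proof -
  define L where "L = - \<sigma>"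
  have L0: "L \<noteq> 0" using assms(1) by (simp add: L_def)
  have pp: "\<And>l. l \<le> d \<Longrightarrow> p l > 0" using assms(4) by (simp add: simplex_def)
  have qp: "\<And>i l. i \<in> {1..n} \<Longrightarrow> l \<le> d \<Longrightarrow> q i l > 0" using assms(3) by (simp add: simplex_def)
  define S where "S i = (\<Sum>l\<le>d. q i l / p l)" for i
  define r where "r i l = (q i l / p l) / S i" for i l
  define M where "M l = (\<Sum>i=1..n. r i l)" for l
  define T where "T = (\<Sum>l\<le>d. p l * M l)"
  have Spos: "S i > 0" if "i \<in> {1..n}" for i
    unfolding S_def using pp qp[OF that] by (intro sum_pos) auto
  have rpos: "r i l > 0" if "i \<in> {1..n}" "l \<le> d" for i l
    unfolding r_def using Spos[OF that(1)] pp[OF that(2)] qp[OF that] by simp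
  have Mpos: "M l > 0" if "l \<le> d" for l
    unfolding M_def using rpos that assms(2) by (intro sum_pos) auto
  have Tpos: "T > 0" unfolding T_def using Mpos pp by (intro sum_pos) auto
  have diff: "difference d (q i) p = r i" for i
    by (rule ext) (simp add: difference_def r_def S_def)
  have den: "1 + L * dotd d (nat_param L p) (stat_F (q i)) = p 0 * S i / q i 0"
    if i: "i \<in> {1..n}" for i
  proof -
    have "L * dotd d (nat_param L p) (stat_F (q i)) = (\<Sum>l=1..d. p 0 * (q i l / p l) / q i 0)"
      unfolding dotd_def nat_param_def stat_F_def sum_distrib_left
      using L0 by (intro sum.cong) auto
    moreover have "p 0 * S i / q i 0 = p 0 * (q i 0 / p 0) / q i 0 + (\<Sum>l=1..d. p 0 * (q i l / p l) / q i 0)"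
    proof -
      have "p 0 * S i / q i 0 = (\<Sum>l\<le>d. p 0 * (q i l / p l) / q i 0)"
        unfolding S_def by (simp add: sum_distrib_left sum_divide_distrib)
      then show ?thesis by (simp only: sum_split0[of _ d])
    qed
    moreover have "p 0 * (q i 0 / p 0) / q i 0 = 1" using pp[of 0] qp[OF i, of 0] by simp
    moreover have "(\<Sum>l=1..d. p 0 * (q i l / p l) / q i 0) = (\<Sum>l=1..d. p 0 * (q i l / p l)) / q i 0"
      by (simp add: sum_divide_distrib)
    ultimately show ?thesis by (simp del: times_divide_eq_right)
  qed
  have inv: "1 / (1 + L * dotd d (nat_param L p) (stat_F (q i))) = r i 0" if i: "i \<in> {1..n}" for i
    using den[OF i] pp[of 0] qp[OF i, of 0] Spos[OF i] by (simp add: r_def)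
  have eta: "eta_next L d n q p j = (p j / p 0) * M j / M 0" if j: "j \<le> d" for j
  proof -
    have "eta_next L d n q p j = (\<Sum>i=1..n. r i 0 / M 0 * (q i j / q i 0))"
    proof -
      have R: "(\<Sum>k=1..n. 1 / (1 + L * dotd d (nat_param L p) (stat_F (q k)))) = M 0"
        unfolding M_def by (intro sum.cong) (simp_all add: inv)
      show ?thesis
        unfolding eta_next_def Let_def weight_def R
      proof (intro sum.cong refl)
        fix i assume i: "i \<in> {1..n}"
        have "1 / (1 + L * dotd d (nat_param L p) (stat_F (q i))) / M 0 * stat_F (q i) j
              = r i 0 / M 0 * stat_F (q i) j" by (simp only: inv[OF i])
        then show "1 / (1 + L * dotd d (nat_param L p) (stat_F (q i))) / M 0 * stat_F (q i) j
              = r i 0 / M 0 * (q i j / q i 0)" by (simp only: stat_F_def)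
      qed
    qed
    also have "\<dots> = (\<Sum>i=1..n. (p j / p 0) * r i j / M 0)"
    proof (intro sum.cong refl)
      fix i assume i: "i \<in> {1..n}"
      show "r i 0 / M 0 * (q i j / q i 0) = (p j / p 0) * r i j / M 0"
        using pp[of 0] pp[OF j] qp[OF i, of 0] Spos[OF i] by (simp add: r_def field_simps)
    qed
    also have "\<dots> = (p j / p 0) * M j / M 0"
      unfolding M_def by (simp add: sum_distrib_left sum_divide_distrib)
    finally show ?thesis .
  qed
  have seta: "1 + (\<Sum>l=1..d. eta_next L d n q p l) = T / (p 0 * M 0)"
  proof -
    have "(\<Sum>l=1..d. eta_next L d n q p l) = (\<Sum>l=1..d. p l * M l / (p 0 * M 0))"
      by (intro sum.cong) (auto simp: eta)
    moreover have "T / (p 0 * M 0) = p 0 * M 0 / (p 0 * M 0) + (\<Sum>l=1..d. p l * M l / (p 0 * M 0))"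
      unfolding T_def sum_split0[of _ d] by (simp add: sum_divide_distrib add_divide_distrib)
    moreover have "p 0 * M 0 / (p 0 * M 0) = 1" using pp[of 0] Mpos[of 0] by simp
    ultimately show ?thesis by simp
  qed
  have lhs: "fp_step L d n q p j = p j * M j / T" if j: "j \<le> d" for j
  proof -
    have "fp_step L d n q p j = (if j = 0 then 1 / (T / (p 0 * M 0)) else eta_next L d n q p j / (T / (p 0 * M 0)))"
      unfolding fp_step_def eta_to_p_def seta by simp
    then show ?thesis using pp[of 0] Mpos[of 0] Tpos
      by (simp add: eta[OF j] field_simps)
  qed
  have rhs: "perturb d p (\<lambda>l. (1 / real n) * (\<Sum>i=1..n. difference d (q i) p l)) j = p j * M j / T" for j
  proof -
    have nn: "real n > 0" using assms(2) by simp
    have "(\<Sum>l\<le>d. p l * (1 / real n * M l)) = T / real n"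
      unfolding T_def by (simp add: sum_divide_distrib)
    moreover have "(\<lambda>l. (1 / real n) * (\<Sum>i=1..n. difference d (q i) p l)) = (\<lambda>l. 1 / real n * M l)"
      by (simp add: diff M_def)
    ultimately show ?thesis using nn
      by (simp add: perturb_def)
  qed
  show ?thesis using lhs rhs by (simp add: L_def)
qed

end
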